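(* The labelled rule $\Box_S$, with premise $\Gamma, A \leq \mathbf{m} \vdash \mathbf{j} \leq \Box \mathbf{m}, \Delta$ and conclusion $\Gamma \vdash \mathbf{j} \leq \Box A, \Delta$ (where $\mathbf{m}$ does not occur in the conclusion), is sound and invertible on the canonical extension $\mathbb{A}^\delta$ of any $\mathcal{L}$-algebra $\mathbb{A}$; i.e. validity of the premise is equivalent to validity of the conclusion, via the chain: uncurrying (using the side condition), the adjunction $\Diamond^{b}\mathbf{j}\leq\mathbf{m}$ iff $\mathbf{j}\leq\Box\mathbf{m}$, complete meet-generation giving $\Diamond^{b}\mathbf{j}\leq A$, and adjunction again giving $\mathbf{j}\leq\Box A$.
   Context: An $\mathcal{L}$-algebra is a bounded lattice with a finitely join-preserving $\Diamond$ and finitely meet-preserving $\Box$; its canonical extension $\mathbb{A}^\delta=(L^\delta,\Box^\pi,\Diamond^\sigma)$ is complete, with $\Box^\pi$ completely meet-preserving and hence having a left adjoint denoted $\Diamond^{b}$ ($\Diamond^{b}u\leq v$ iff $u\leq\Box v$). Nominals range over a completely join-generating subset and conominals over a completely meet-generating subset of $\mathbb{A}^\delta$. A sequent $\Gamma\vdash\Delta$ of inequalities (labelled formulas $\mathbf{j}\leq A$, $A\leq\mathbf{m}$ and pure structures $\mathbf{j}\leq\mathbf{T}$, $\mathbf{T}\leq\mathbf{m}$) is interpreted as $\forall\overline{p}\forall\overline{\mathbf{j}}\forall\overline{\mathbf{m}}(\bigwedge\Gamma\Rightarrow\bigvee\Delta)$. *)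

theory Defs
  imports Main
begin

definition L_algebra :: "('b::bounded_lattice \<Rightarrow> 'b) \<Rightarrow> ('b \<Rightarrow> 'b) \<Rightarrow> bool" where
  "L_algebra box dia \<longleftrightarrow>
     box top = top \<and> (\<forall>x y. box (inf x y) = inf (box x) (box y)) \<and>
     dia bot = bot \<and> (\<forall>x y. dia (sup x y) = sup (dia x) (dia y))"

definition closed_elems :: "('b \<Rightarrow> 'a::complete_lattice) \<Rightarrow> 'a set" where
  "closed_elems e = {Inf (e ` S) | S. True}"

definition open_elems :: "('b \<Rightarrow> 'a::complete_lattice) \<Rightarrow> 'a set" where
  "open_elems e = {Sup (e ` S) | S. True}"

definition canonical_extension :: "('b::bounded_lattice \<Rightarrow> 'a::complete_lattice) \<Rightarrow> bool" where
  "canonical_extension e \<longleftrightarrow>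
     inj e \<and> e top = top \<and> e bot = bot \<and>
     (\<forall>x y. e (inf x y) = inf (e x) (e y)) \<and> (\<forall>x y. e (sup x y) = sup (e x) (e y)) \<and>
     \<comment> \<open>density\<close>
     (\<forall>u. u = Sup {k \<in> closed_elems e. k \<le> u} \<and> u = Inf {w \<in> open_elems e. u \<le> w}) \<and>
     \<comment> \<open>compactness\<close>
     (\<forall>S T. Inf (e ` S) \<le> Sup (e ` T) \<longrightarrow>
        (\<exists>S' T'. finite S' \<and> finite T' \<and> S' \<subseteq> S \<and> T' \<subseteq> T \<and> Inf (e ` S') \<le> Sup (e ` T')))"

definition pi_ext :: "('b \<Rightarrow> 'a::complete_lattice) \<Rightarrow> ('b \<Rightarrow> 'b) \<Rightarrow> 'a \<Rightarrow> 'a" where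
  "pi_ext e f u = Inf {Sup {e (f a) | a. e a \<le> w} | w. w \<in> open_elems e \<and> u \<le> w}"

definition sigma_ext :: "('b \<Rightarrow> 'a::complete_lattice) \<Rightarrow> ('b \<Rightarrow> 'b) \<Rightarrow> 'a \<Rightarrow> 'a" where
  "sigma_ext e f u = Sup {Inf {e (f a) | a. k \<le> e a} | k. k \<in> closed_elems e \<and> k \<le> u}"

definition left_adj :: "('a::complete_lattice \<Rightarrow> 'a) \<Rightarrow> 'a \<Rightarrow> 'a" where
  "left_adj g u = Inf {v. u \<le> g v}"

definition join_generating :: "'a::complete_lattice set \<Rightarrow> bool" where
  "join_generating J \<longleftrightarrow> (\<forall>u. u = Sup {x \<in> J. x \<le> u})"

definition meet_generating :: "'a::complete_lattice set \<Rightarrow> bool" where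
  "meet_generating M \<longleftrightarrow> (\<forall>u. u = Inf {x \<in> M. u \<le> x})"

datatype trm =
    Prop nat | Nom nat | Conom nat | TTop | TBot
  | TMeet trm trm | TJoin trm trm | TBox trm | TDia trm
  | TDiaB trm   \<comment> \<open>black diamond: left adjoint of box, for pure structures\<close>

datatype ineq = Le trm trm

fun conoms :: "trm \<Rightarrow> nat set" where
  "conoms (Conom m) = {m}"
| "conoms (TMeet a b) = conoms a \<union> conoms b"
| "conoms (TJoin a b) = conoms a \<union> conoms b"
| "conoms (TBox a) = conoms a"
| "conoms (TDia a) = conoms a"
| "conoms (TDiaB a) = conoms a"
| "conoms _ = {}"

fun ineq_conoms :: "ineq \<Rightarrow> nat set" where
  "ineq_conoms (Le a b) = conoms a \<union> conoms b"

fun tval :: "('b::bounded_lattice \<Rightarrow> 'a::complete_lattice) \<Rightarrow> ('b \<Rightarrow> 'b) \<Rightarrow> ('b \<Rightarrow> 'b) \<Rightarrow>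
    (nat \<Rightarrow> 'a) \<Rightarrow> (nat \<Rightarrow> 'a) \<Rightarrow> (nat \<Rightarrow> 'a) \<Rightarrow> trm \<Rightarrow> 'a" where
  "tval e box dia v vj vm (Prop p) = v p"
| "tval e box dia v vj vm (Nom j) = vj j"
| "tval e box dia v vj vm (Conom m) = vm m"
| "tval e box dia v vj vm TTop = top"
| "tval e box dia v vj vm TBot = bot"
| "tval e box dia v vj vm (TMeet a b) = inf (tval e box dia v vj vm a) (tval e box dia v vj vm b)"
| "tval e box dia v vj vm (TJoin a b) = sup (tval e box dia v vj vm a) (tval e box dia v vj vm b)"
| "tval e box dia v vj vm (TBox a) = pi_ext e box (tval e box dia v vj vm a)"
| "tval e box dia v vj vm (TDia a) = sigma_ext e dia (tval e box dia v vj vm a)"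
| "tval e box dia v vj vm (TDiaB a) = left_adj (pi_ext e box) (tval e box dia v vj vm a)"

fun ival :: "('b::bounded_lattice \<Rightarrow> 'a::complete_lattice) \<Rightarrow> ('b \<Rightarrow> 'b) \<Rightarrow> ('b \<Rightarrow> 'b) \<Rightarrow>
    (nat \<Rightarrow> 'a) \<Rightarrow> (nat \<Rightarrow> 'a) \<Rightarrow> (nat \<Rightarrow> 'a) \<Rightarrow> ineq \<Rightarrow> bool" where
  "ival e box dia v vj vm (Le a b) \<longleftrightarrow> tval e box dia v vj vm a \<le> tval e box dia v vj vm b"

definition seq_valid :: "('b::bounded_lattice \<Rightarrow> 'a::complete_lattice) \<Rightarrow> ('b \<Rightarrow> 'b) \<Rightarrow> ('b \<Rightarrow> 'b) \<Rightarrow>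
    'a set \<Rightarrow> 'a set \<Rightarrow> ineq list \<Rightarrow> ineq list \<Rightarrow> bool" where
  "seq_valid e box dia J M \<Gamma> \<Delta> \<longleftrightarrow>
     (\<forall>v vj vm. (\<forall>i. vj i \<in> J) \<longrightarrow> (\<forall>i. vm i \<in> M) \<longrightarrow>
        (\<forall>g \<in> set \<Gamma>. ival e box dia v vj vm g) \<longrightarrow> (\<exists>d \<in> set \<Delta>. ival e box dia v vj vm d))"

end

theory Submission
  imports Defs
begin

lemma tval_upd:
  "m \<notin> conoms t \<Longrightarrow> tval e box dia v vj (vm(m:=x)) t = tval e box dia v vj vm t"
  by (induction t) auto

lemma ival_upd:
  "m \<notin> ineq_conoms g \<Longrightarrow> ival e box dia v vj (vm(m:=x)) g = ival e box dia v vj vm g"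
  by (cases g) (simp add: tval_upd)

lemma pi_mono:
  "u \<le> u' \<Longrightarrow> pi_ext e f u \<le> pi_ext e f u'"
  unfolding pi_ext_def by (rule Inf_superset_mono) auto

lemma pi_open:
  assumes "u \<le> Sup (e ` T)"
  shows "pi_ext e f u \<le> Sup (e ` f ` {a. e a \<le> Sup (e ` T)})"
proof -
  have "Sup (e ` f ` {a. e a \<le> Sup (e ` T)}) \<in>
     {Sup {e (f a) | a. e a \<le> w} | w. w \<in> open_elems e \<and> u \<le> w}"
    using assms unfolding open_elems_def
    by (auto intro!: exI[of _ "Sup (e ` T)"] arg_cong[where f=Sup])
  then show ?thesis unfolding pi_ext_def by (rule Inf_lower)
qed

lemma emono:
  fixes e :: "'b::lattice \<Rightarrow> 'a::lattice"
  assumes "\<forall>x y. e (inf x y) = inf (e x) (e y)" "x \<le> y"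
  shows "e x \<le> e y"
proof -
  have "e x = e (inf x y)" using assms(2) by (simp add: inf.absorb1)
  also have "\<dots> = inf (e x) (e y)" using assms(1) by simp
  finally have "e x = inf (e x) (e y)" .
  then show ?thesis by (metis inf_le2)
qed

lemma fmono:
  fixes f :: "'b::lattice \<Rightarrow> 'b"
  assumes "\<forall>x y. f (inf x y) = inf (f x) (f y)" "x \<le> y"
  shows "f x \<le> f y"
proof -
  have "f x = f (inf x y)" using assms(2) by (simp add: inf.absorb1)
  also have "\<dots> = inf (f x) (f y)" using assms(1) by simp
  finally have "f x = inf (f x) (f y)" .
  then show ?thesis by (metis inf_le2)
qed

lemma fin_inf:
  fixes e :: "'b::bounded_lattice \<Rightarrow> 'a::complete_lattice"
  assumes "finite G'" "G' \<subseteq> G" "top \<in> G" "\<And>a b. a \<in> G \<Longrightarrow> b \<in> G \<Longrightarrow> inf a b \<in> G"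
    "e top = top" "\<forall>x y. e (inf x y) = inf (e x) (e y)"
  shows "\<exists>a\<in>G. e a = Inf (e ` G')"
  using assms(1,2)
proof (induction G' rule: finite_induct)
  case empty then show ?case using assms by auto
next
  case (insert x F)
  then obtain a where "a \<in> G" "e a = Inf (e ` F)" by auto
  then show ?case using insert assms by (intro bexI[of _ "inf x a"]) auto
qed

lemma fin_sup:
  fixes e :: "'b::bounded_lattice \<Rightarrow> 'a::complete_lattice"
  assumes "finite G'" "e bot = bot" "\<forall>x y. e (sup x y) = sup (e x) (e y)"
  shows "\<exists>a. e a = Sup (e ` G') \<and> (\<forall>x\<in>G'. x \<le> a)"
  using assms(1)
proof (induction G' rule: finite_induct)
  case empty then show ?case using assms by auto
next
  case (insert x F)
  then obtain a where "e a = Sup (e ` F)" "\<forall>x\<in>F. x \<le> a" by auto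
  then show ?case using assms
    by (intro exI[of _ "sup x a"]) (auto intro: le_supI2)
qed

lemma pi_inf:
  fixes e :: "'b::bounded_lattice \<Rightarrow> 'a::complete_lattice"
  assumes ce: "canonical_extension e"
    and ftop: "f top = top" and finf: "\<forall>x y. f (inf x y) = inf (f x) (f y)"
  shows "Inf (pi_ext e f ` U) \<le> pi_ext e f (Inf U)"
proof -
  have etop: "e top = top" and ebot: "e bot = bot"
    and einf: "\<forall>x y. e (inf x y) = inf (e x) (e y)"
    and esup: "\<forall>x y. e (sup x y) = sup (e x) (e y)"
    and dens: "\<And>u. u = Sup {k \<in> closed_elems e. k \<le> u}"
    and dens2: "\<And>u. u = Inf {w \<in> open_elems e. u \<le> w}"
    and comp: "\<And>S T. Inf (e ` S) \<le> Sup (e ` T) \<Longrightarrow>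
        (\<exists>S' T'. finite S' \<and> finite T' \<and> S' \<subseteq> S \<and> T' \<subseteq> T \<and> Inf (e ` S') \<le> Sup (e ` T'))"
    using ce unfolding canonical_extension_def by blast+
  let ?X = "Inf (pi_ext e f ` U)"
  show ?thesis unfolding pi_ext_def[of e f "Inf U"]
  proof (rule Inf_greatest, clarify)
    fix w assume "w \<in> open_elems e" and Uo: "Inf U \<le> w"
    then obtain T where wT: "w = Sup (e ` T)" unfolding open_elems_def by auto
    have "?X = Sup {k \<in> closed_elems e. k \<le> ?X}" by (rule dens)
    also have "\<dots> \<le> Sup {e (f x) |x. e x \<le> w}"
    proof (rule Sup_least)
      fix k assume "k \<in> {k \<in> closed_elems e. k \<le> ?X}"
      then have "k \<in> closed_elems e" and kX: "k \<le> ?X" by auto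
      from \<open>k \<in> closed_elems e\<close> obtain S where kS: "k = Inf (e ` S)" unfolding closed_elems_def by auto
      define G where "G = {a. k \<le> e (f a)}"
      have Gtop: "top \<in> G" unfolding G_def using ftop etop by simp
      have Ginf: "\<And>a b. a \<in> G \<Longrightarrow> b \<in> G \<Longrightarrow> inf a b \<in> G"
        unfolding G_def using finf einf by simp
      have k'U: "Inf (e ` G) \<le> u" if "u \<in> U" for u
      proof (subst dens2[of u], rule Inf_greatest, clarify)
        fix w' assume "w' \<in> open_elems e" "u \<le> w'"
        then obtain T' where wT': "w' = Sup (e ` T')" unfolding open_elems_def by auto
        have "k \<le> pi_ext e f u" using kX that by (meson INF_lower order_trans)
        also have "\<dots> \<le> Sup (e ` f ` {a. e a \<le> w'})" using pi_open[of u e T' f] \<open>u \<le> w'\<close> wT' by simp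
        finally have "Inf (e ` S) \<le> Sup (e ` (f ` {a. e a \<le> w'}))" using kS by simp
        from comp[OF this] obtain S' T0 where st: "finite S'" "finite T0" "S' \<subseteq> S"
          "T0 \<subseteq> f ` {a. e a \<le> w'}" "Inf (e ` S') \<le> Sup (e ` T0)" by blast
        then obtain A' where A': "A' \<subseteq> {a. e a \<le> w'}" "finite A'" "T0 = f ` A'"
          by (meson finite_subset_image)
        obtain b where b: "e b = Sup (e ` A')" "\<forall>x\<in>A'. x \<le> b"
          using fin_sup[OF A'(2) ebot esup] by blast
        have "k \<le> Inf (e ` S')" using kS st(3) by (simp add: Inf_superset_mono image_mono)
        also have "\<dots> \<le> Sup (e ` f ` A')" using st A' by simp
        also have "\<dots> \<le> e (f b)"
          by (rule Sup_least) (use b emono[OF einf] fmono[OF finf] in auto)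
        finally have "b \<in> G" unfolding G_def by simp
        then have "Inf (e ` G) \<le> e b" by (simp add: INF_lower)
        also have "\<dots> \<le> w'" using b A'(1) by (auto intro: Sup_least)
        finally show "Inf (e ` G) \<le> w'" .
      qed
      have "Inf (e ` G) \<le> Inf U" by (rule Inf_greatest) (rule k'U)
      then have "Inf (e ` G) \<le> Sup (e ` T)" using Uo wT by simp
      from comp[OF this] obtain G' T' where gt: "finite G'" "finite T'" "G' \<subseteq> G" "T' \<subseteq> T"
        "Inf (e ` G') \<le> Sup (e ` T')" by blast
      obtain a where a: "a \<in> G" "e a = Inf (e ` G')"
        using fin_inf[OF gt(1) gt(3) Gtop Ginf etop einf] by blast
      obtain b where b: "e b = Sup (e ` T')"
        using fin_sup[OF gt(2) ebot esup] by blast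
      have "Sup (e ` T') \<le> Sup (e ` T)" using gt(4) by (rule Sup_subset_mono[OF image_mono])
      then have "e a \<le> w" using a gt(5) wT by simp
      have "k \<le> e (f a)" using a unfolding G_def by simp
      also have "e (f a) \<le> Sup {e (f x) |x. e x \<le> w}"
        by (rule Sup_upper) (use \<open>e a \<le> w\<close> in blast)
      finally show "k \<le> Sup {e (f x) |x. e x \<le> w}" .
    qed
    finally show "?X \<le> Sup {e (f a) |a. e a \<le> w}" .
  qed
qed

theorem mainTheorem4:
  fixes e :: "'b::bounded_lattice \<Rightarrow> 'a::complete_lattice"
    and box dia :: "'b \<Rightarrow> 'b"
    and J M :: "'a set"
    and \<Gamma> \<Delta> :: "ineq list" and A :: trm and j m :: nat
  assumes "L_algebra box dia"
    and "canonical_extension e"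
    and "join_generating J"
    and "meet_generating M"
    and "m \<notin> (\<Union>g \<in> set \<Gamma>. ineq_conoms g)"
    and "m \<notin> (\<Union>d \<in> set \<Delta>. ineq_conoms d)"
    and "m \<notin> conoms A"
  shows "seq_valid e box dia J M (\<Gamma> @ [Le A (Conom m)]) (Le (Nom j) (TBox (Conom m)) # \<Delta>)
     \<longleftrightarrow> seq_valid e box dia J M \<Gamma> (Le (Nom j) (TBox A) # \<Delta>)"
proof
  assume P: "seq_valid e box dia J M (\<Gamma> @ [Le A (Conom m)]) (Le (Nom j) (TBox (Conom m)) # \<Delta>)"
  have P': "\<And>v vj vm. (\<forall>i. vj i \<in> J) \<Longrightarrow> (\<forall>i. vm i \<in> M) \<Longrightarrow>
        (\<forall>g \<in> set (\<Gamma> @ [Le A (Conom m)]). ival e box dia v vj vm g) \<Longrightarrow>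
        (\<exists>d \<in> set (Le (Nom j) (TBox (Conom m)) # \<Delta>). ival e box dia v vj vm d)"
    using P unfolding seq_valid_def by blast
  show "seq_valid e box dia J M \<Gamma> (Le (Nom j) (TBox A) # \<Delta>)"
    unfolding seq_valid_def
  proof (intro allI impI)
    fix v vj vm assume vj: "\<forall>i. vj i \<in> J" and vm: "\<forall>i. vm i \<in> M"
      and G: "\<forall>g\<in>set \<Gamma>. ival e box dia v vj vm g"
    let ?a = "tval e box dia v vj vm A"
    let ?pi = "pi_ext e box"
    show "\<exists>d\<in>set (Le (Nom j) (TBox A) # \<Delta>). ival e box dia v vj vm d"
    proof (cases "\<exists>d\<in>set \<Delta>. ival e box dia v vj vm d")
      case True then show ?thesis by auto
    next
      case False
      have H: "vj j \<le> ?pi x" if "x \<in> M" "?a \<le> x" for x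
      proof -
        have "\<forall>i. (vm(m:=x)) i \<in> M" using vm that by auto
        moreover have "\<forall>g\<in>set (\<Gamma> @ [Le A (Conom m)]). ival e box dia v vj (vm(m:=x)) g"
          using G that assms(5,7) by (auto simp: ival_upd tval_upd)
        ultimately have "\<exists>d\<in>set (Le (Nom j) (TBox (Conom m)) # \<Delta>). ival e box dia v vj (vm(m:=x)) d"
          by (rule P'[OF vj])
        then show ?thesis using False assms(6) by (auto simp: ival_upd)
      qed
      have "vj j \<le> Inf (?pi ` {x \<in> M. ?a \<le> x})" using H by (auto intro: INF_greatest)
      also have "\<dots> \<le> ?pi (Inf {x \<in> M. ?a \<le> x})"
        by (rule pi_inf[OF assms(2)]) (use assms(1) in \<open>simp_all add: L_algebra_def\<close>)
      also have "Inf {x \<in> M. ?a \<le> x} = ?a"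
        using meet_generating_def[THEN iffD1, OF assms(4), rule_format, of ?a] by simp
      finally show ?thesis by simp
    qed
  qed
next
  assume C: "seq_valid e box dia J M \<Gamma> (Le (Nom j) (TBox A) # \<Delta>)"
  show "seq_valid e box dia J M (\<Gamma> @ [Le A (Conom m)]) (Le (Nom j) (TBox (Conom m)) # \<Delta>)"
    unfolding seq_valid_def
  proof (intro allI impI)
    fix v vj vm assume vj: "\<forall>i. vj i \<in> J" and vm: "\<forall>i. vm i \<in> M"
      and G: "\<forall>g\<in>set (\<Gamma> @ [Le A (Conom m)]). ival e box dia v vj vm g"
    then have "\<exists>d\<in>set (Le (Nom j) (TBox A) # \<Delta>). ival e box dia v vj vm d"
      using C unfolding seq_valid_def by auto
    moreover have "tval e box dia v vj vm A \<le> vm m" using G by auto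
    ultimately show "\<exists>d\<in>set (Le (Nom j) (TBox (Conom m)) # \<Delta>). ival e box dia v vj vm d"
      using pi_mono[of "tval e box dia v vj vm A" "vm m" e box]
      by (auto intro: order_trans)
  qed
qed

end
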